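(* Let $K$ be a reversible substochastic kernel on a finite probability space $(E,\rho)$, and let $\delta=\rho(1-K1)$. Assume that for all nonnegative $f$, $\operatorname{Ent}_\rho(f^2)\le A\,\mathcal E^\rho_K(f,f)$. Let $T_t=e^{t(K-I)}$ and $u_t=T_tu_0$ for any $u_0\ge0$. Then for all $t\ge0$, \[ H_\rho(u_t)\le e^{-t/A}H_\rho(u_0)+A\delta\,\rho(u_0)(1-e^{-t/A}). \]
   Context: A substochastic kernel is a nonnegative kernel with row sums at most one; reversible means $\rho(x)K(x,y)=\rho(y)K(y,x)$. $\mathcal E^\rho_K(f,f)=\langle f,(I-K)f\rangle_\rho$. $\operatorname{Ent}_\rho(f^2)=\rho(f^2\log f^2)-\rho(f^2)\log\rho(f^2)$. For nonnegative $u$, $H_\rho(u)=\rho\left[u\log\frac{u}{\rho(u)}\right]$ with the convention $0\log0=0$. $1$ denotes the constant function. *)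

theory Defs
  imports "HOL-Analysis.Analysis"
begin

definition kop :: "('a::finite \<Rightarrow> 'a \<Rightarrow> real) \<Rightarrow> ('a \<Rightarrow> real) \<Rightarrow> 'a \<Rightarrow> real" where
  "kop K f = (\<lambda>x. \<Sum>y\<in>UNIV. K x y * f y)"

definition expect :: "('a::finite \<Rightarrow> real) \<Rightarrow> ('a \<Rightarrow> real) \<Rightarrow> real" where
  "expect \<rho> f = (\<Sum>x\<in>UNIV. \<rho> x * f x)"

definition substochastic :: "('a::finite \<Rightarrow> 'a \<Rightarrow> real) \<Rightarrow> bool" where
  "substochastic K \<longleftrightarrow> (\<forall>x y. 0 \<le> K x y) \<and> (\<forall>x. (\<Sum>y\<in>UNIV. K x y) \<le> 1)"

definition reversible :: "('a \<Rightarrow> real) \<Rightarrow> ('a \<Rightarrow> 'a \<Rightarrow> real) \<Rightarrow> bool" where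
  "reversible \<rho> K \<longleftrightarrow> (\<forall>x y. \<rho> x * K x y = \<rho> y * K y x)"

definition prob_fun :: "('a::finite \<Rightarrow> real) \<Rightarrow> bool" where
  "prob_fun \<rho> \<longleftrightarrow> (\<forall>x. 0 \<le> \<rho> x) \<and> (\<Sum>x\<in>UNIV. \<rho> x) = 1"

definition dirichlet :: "('a::finite \<Rightarrow> real) \<Rightarrow> ('a \<Rightarrow> 'a \<Rightarrow> real) \<Rightarrow> ('a \<Rightarrow> real) \<Rightarrow> real" where
  "dirichlet \<rho> K f = expect \<rho> (\<lambda>x. f x * (f x - kop K f x))"

definition xlogx :: "real \<Rightarrow> real" where
  "xlogx s = (if s = 0 then 0 else s * ln s)"

definition Ent :: "('a::finite \<Rightarrow> real) \<Rightarrow> ('a \<Rightarrow> real) \<Rightarrow> real" where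
  "Ent \<rho> g = expect \<rho> (\<lambda>x. xlogx (g x)) - xlogx (expect \<rho> g)"

definition Hent :: "('a::finite \<Rightarrow> real) \<Rightarrow> ('a \<Rightarrow> real) \<Rightarrow> real" where
  "Hent \<rho> u = expect \<rho> (\<lambda>x. if u x = 0 then 0 else u x * ln (u x / expect \<rho> u))"

definition heat :: "('a::finite \<Rightarrow> 'a \<Rightarrow> real) \<Rightarrow> real \<Rightarrow> ('a \<Rightarrow> real) \<Rightarrow> 'a \<Rightarrow> real" where
  "heat K t u = (\<lambda>x. \<Sum>n. t ^ n / fact n * (((\<lambda>f. (\<lambda>z. kop K f z - f z)) ^^ n) u) x)"

end

theory Submission
  imports Defs
begin

definition S :: "('a::finite \<Rightarrow> 'a \<Rightarrow> real) \<Rightarrow> real \<Rightarrow> ('a \<Rightarrow> real) \<Rightarrow> 'a \<Rightarrow> real" where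
  "S M t u = (\<lambda>x. \<Sum>n. t ^ n / fact n * ((kop M ^^ n) u) x)"

definition Lm :: "('a::finite \<Rightarrow> 'a \<Rightarrow> real) \<Rightarrow> 'a \<Rightarrow> 'a \<Rightarrow> real" where
  "Lm K = (\<lambda>z y. K z y - (if z = y then 1 else 0))"

lemma kop_Lm: "kop (Lm K) = (\<lambda>f z. kop K f z - f z)"
proof (intro ext)
  fix f :: "'a \<Rightarrow> real" and z :: 'a
  have "(\<Sum>y\<in>UNIV. (if z = y then 1 else 0) * f y) = (\<Sum>y\<in>UNIV. if z = y then f y else 0)"
    by (intro sum.cong) simp_all
  also have "\<dots> = f z" by simp
  finally show "kop (Lm K) f z = kop K f z - f z"
    by (simp add: kop_def Lm_def left_diff_distrib sum_subtractf)
qed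

lemma heat_S: "heat K t u = S (Lm K) t u"
  unfolding heat_def S_def kop_Lm ..

lemma kop_lin: "kop M (\<lambda>y. f y + c * g y) x = kop M f x + c * kop M g x"
  by (simp add: kop_def algebra_simps sum.distrib sum_distrib_left)

lemma kop_diff: "kop M (\<lambda>y. f y - g y) x = kop M f x - kop M g x"
  by (simp add: kop_def algebra_simps sum_subtractf)

lemma kop_pow_lin: "((kop M ^^ n) (\<lambda>y. f y + c * g y)) x = ((kop M ^^ n) f) x + c * ((kop M ^^ n) g) x"
proof (induction n arbitrary: x)
  case 0 then show ?case by simp
next
  case (Suc n)
  have "((kop M ^^ Suc n) (\<lambda>y. f y + c * g y)) x = kop M ((kop M ^^ n) (\<lambda>y. f y + c * g y)) x" by simp
  also have "(kop M ^^ n) (\<lambda>y. f y + c * g y) = (\<lambda>y. ((kop M ^^ n) f) y + c * ((kop M ^^ n) g) y)"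
    using Suc by (intro ext) simp
  finally show ?case by (simp add: kop_lin)
qed

definition Cm :: "('a::finite \<Rightarrow> 'a \<Rightarrow> real) \<Rightarrow> real" where
  "Cm M = (\<Sum>z\<in>UNIV. \<Sum>y\<in>UNIV. \<bar>M z y\<bar>)"

lemma Cm_nonneg: "0 \<le> Cm M"
  unfolding Cm_def by (intro sum_nonneg) auto

lemma kop_bound:
  assumes "\<And>y. \<bar>f y\<bar> \<le> B"
  shows "\<bar>kop M f z\<bar> \<le> Cm M * B"
proof -
  have B: "0 \<le> B" using assms[of undefined] by linarith
  have "\<bar>kop M f z\<bar> \<le> (\<Sum>y\<in>UNIV. \<bar>M z y * f y\<bar>)"
    unfolding kop_def by (rule sum_abs)
  also have "\<dots> \<le> (\<Sum>y\<in>UNIV. \<bar>M z y\<bar> * B)"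
    by (intro sum_mono) (auto simp: abs_mult intro!: mult_left_mono assms)
  also have "\<dots> = (\<Sum>y\<in>UNIV. \<bar>M z y\<bar>) * B" by (simp add: sum_distrib_right)
  also have "\<dots> \<le> Cm M * B"
    unfolding Cm_def
    by (intro mult_right_mono B member_le_sum[where f="\<lambda>z. \<Sum>y\<in>UNIV. \<bar>M z y\<bar>"]) (auto intro: sum_nonneg)
  finally show ?thesis .
qed

lemma kop_pow_bound: "\<bar>((kop M ^^ n) u) x\<bar> \<le> Cm M ^ n * (\<Sum>y\<in>UNIV. \<bar>u y\<bar>)"
proof (induction n arbitrary: x)
  case 0 then show ?case by (simp add: member_le_sum[where f="\<lambda>y. \<bar>u y\<bar>"])
next
  case (Suc n)
  have "\<bar>kop M ((kop M ^^ n) u) x\<bar> \<le> Cm M * (Cm M ^ n * (\<Sum>y\<in>UNIV. \<bar>u y\<bar>))"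
    by (rule kop_bound) (rule Suc)
  then show ?case by (simp add: mult.assoc)
qed

lemma summable_S_abs: "summable (\<lambda>n. \<bar>t ^ n / fact n * ((kop M ^^ n) u) x\<bar>)"
proof -
  let ?B = "\<Sum>y\<in>UNIV. \<bar>u y\<bar>"
  have s: "summable (\<lambda>n. ?B * ((\<bar>t\<bar> * Cm M) ^ n / fact n))"
    using summable_exp[of "\<bar>t\<bar> * Cm M"] by (intro summable_mult) (simp add: field_simps)
  show ?thesis
  proof (rule summable_comparison_test'[OF s])
    fix n
    have "\<bar>t ^ n / fact n * ((kop M ^^ n) u) x\<bar> = \<bar>t\<bar>^n / fact n * \<bar>((kop M ^^ n) u) x\<bar>"
      by (simp add: abs_mult power_abs)
    also have "\<dots> \<le> \<bar>t\<bar>^n / fact n * (Cm M ^ n * ?B)"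
      by (intro mult_left_mono kop_pow_bound) auto
    also have "\<dots> = ?B * ((\<bar>t\<bar> * Cm M) ^ n / fact n)" by (simp add: power_mult_distrib)
    finally show "norm \<bar>t ^ n / fact n * ((kop M ^^ n) u) x\<bar> \<le> ?B * ((\<bar>t\<bar> * Cm M) ^ n / fact n)" by simp
  qed
qed

lemma summable_S: "summable (\<lambda>n. t ^ n / fact n * ((kop M ^^ n) u) x)"
  by (rule summable_rabs_cancel[OF summable_S_abs])

lemma S_zero: "S M 0 u x = u x"
proof -
  have "S M 0 u x = (\<Sum>n. ((kop M ^^ n) u) x / fact n * 0 ^ n)"
    unfolding S_def by (simp add: mult.commute)
  also have "\<dots> = u x" by (subst powser_zero) simp
  finally show ?thesis .
qed

lemma S_lin: "S M t (\<lambda>y. f y + c * g y) x = S M t f x + c * S M t g x"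
proof -
  have "S M t (\<lambda>y. f y + c * g y) x = (\<Sum>n. t ^ n / fact n * ((kop M ^^ n) f) x + c * (t ^ n / fact n * ((kop M ^^ n) g) x))"
    unfolding S_def kop_pow_lin by (simp add: algebra_simps)
  also have "\<dots> = (\<Sum>n. t ^ n / fact n * ((kop M ^^ n) f) x) + (\<Sum>n. c * (t ^ n / fact n * ((kop M ^^ n) g) x))"
    by (rule suminf_add[symmetric]) (rule summable_S, rule summable_mult, rule summable_S)
  also have "\<dots> = S M t f x + c * S M t g x"
    by (simp only: S_def suminf_mult[OF summable_S])
  finally show ?thesis .
qed

lemma S_deriv: "((\<lambda>t. S M t u x) has_real_derivative kop M (S M t u) x) (at t)"
proof -
  define c where "c n = ((kop M ^^ n) u) x / fact n" for n
  have eq: "(\<lambda>t. S M t u x) = (\<lambda>t. \<Sum>n. c n * t ^ n)"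
    unfolding S_def c_def by (simp add: mult.commute)
  have "summable (\<lambda>n. c n * y ^ n)" for y
    using summable_S[of y M u x] unfolding c_def by (simp add: mult.commute)
  then have d: "((\<lambda>t. \<Sum>n. c n * t ^ n) has_real_derivative (\<Sum>n. diffs c n * t ^ n)) (at t)"
    by (rule termdiffs_strong_converges_everywhere)
  have dc: "diffs c n * t ^ n = (\<Sum>y\<in>UNIV. M x y * (t ^ n / fact n * ((kop M ^^ n) u) y))" for n
  proof -
    have "diffs c n * t ^ n = t ^ n / fact n * ((kop M ^^ Suc n) u) x"
      unfolding diffs_def c_def by (simp add: field_simps del: of_nat_Suc)
    also have "\<dots> = (\<Sum>y\<in>UNIV. M x y * (t ^ n / fact n * ((kop M ^^ n) u) y))"
      by (simp add: kop_def sum_distrib_left algebra_simps)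
    finally show ?thesis .
  qed
  have "(\<Sum>n. diffs c n * t ^ n) = (\<Sum>y\<in>UNIV. \<Sum>n. M x y * (t ^ n / fact n * ((kop M ^^ n) u) y))"
    unfolding dc by (rule suminf_sum) (intro summable_mult summable_S)
  also have "\<dots> = (\<Sum>y\<in>UNIV. M x y * (\<Sum>n. t ^ n / fact n * ((kop M ^^ n) u) y))"
    by (intro sum.cong refl suminf_mult summable_S)
  also have "\<dots> = kop M (S M t u) x"
    unfolding kop_def S_def by simp
  finally show ?thesis using d eq by simp
qed


lemma uniq_zero:
  fixes d :: "real \<Rightarrow> 'a::finite \<Rightarrow> real"
  assumes K0: "\<And>x y. 0 \<le> K x y" and K1: "\<And>x y. K x y \<le> 1"
    and dd: "\<And>t x. ((\<lambda>t. d t x) has_real_derivative kop (Lm K) (d t) x) (at t)"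
    and d0: "\<And>x. d 0 x = 0" and T: "0 \<le> T"
  shows "d T x = 0"
proof -
  obtain c :: real where c_def: "c = real (card (UNIV :: 'a set))" by blast
  define g where "g t = (\<Sum>x\<in>UNIV. (d t x)^2)" for t
  define g' where "g' t = (\<Sum>x\<in>UNIV. 2 * d t x * kop (Lm K) (d t) x)" for t
  have gd: "(g has_real_derivative g' t) (at t)" for t
    unfolding g_def g'_def
    by (rule DERIV_sum, rule DERIV_cong[OF DERIV_power[OF dd]]) simp
  have gbound: "g' t \<le> 2 * c * g t" for t
  proof -
    have pw: "d t x * (K x y * d t y) \<le> ((d t x)^2 + (d t y)^2) / 2" for x y
    proof -
      have "d t x * d t y \<le> ((d t x)^2 + (d t y)^2) / 2"
        using sum_squares_bound[of "d t x" "d t y"] by (simp add: power2_eq_square)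
      hence "K x y * (d t x * d t y) \<le> K x y * (((d t x)^2 + (d t y)^2) / 2)"
        using K0[of x y] by (intro mult_left_mono)
      also have "\<dots> \<le> 1 * (((d t x)^2 + (d t y)^2) / 2)"
        by (intro mult_right_mono K1) auto
      finally show ?thesis by (simp add: algebra_simps)
    qed
    have "g' t = 2 * (\<Sum>x\<in>UNIV. \<Sum>y\<in>UNIV. d t x * (K x y * d t y)) - 2 * g t"
      unfolding g'_def g_def kop_Lm kop_def
      by (simp add: sum_distrib_left sum_subtractf algebra_simps power2_eq_square)
    also have "(\<Sum>x\<in>UNIV. \<Sum>y\<in>UNIV. d t x * (K x y * d t y)) \<le> (\<Sum>x\<in>UNIV. \<Sum>y\<in>UNIV. ((d t x)^2 + (d t y)^2) / 2)"
      by (intro sum_mono pw)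
    also have "(\<Sum>x\<in>UNIV. \<Sum>y\<in>UNIV. ((d t x)^2 + (d t y)^2) / 2) = (\<Sum>x\<in>UNIV. \<Sum>y\<in>(UNIV::'a set). (d t x)^2 / 2) + (\<Sum>x\<in>(UNIV::'a set). \<Sum>y\<in>UNIV. (d t y)^2 / 2)"
      by (simp add: sum.distrib add_divide_distrib)
    also have "\<dots> = c * g t"
      unfolding g_def c_def by (simp add: sum_divide_distrib[symmetric] sum_distrib_left[symmetric])
    finally have "g' t \<le> 2 * (c * g t) - 2 * g t" by simp
    moreover have "0 \<le> g t" unfolding g_def by (intro sum_nonneg) auto
    ultimately show ?thesis by simp
  qed
  define h where "h t = exp (- (2 * c) * t) * g t" for t
  have hd: "(h has_real_derivative exp (- (2 * c) * t) * (g' t - 2 * c * g t)) (at t)" for t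
    unfolding h_def
    by (rule derivative_eq_intros gd refl | simp)+ (simp add: algebra_simps)
  have "h T \<le> h 0"
    by (rule DERIV_nonpos_imp_nonincreasing[OF T])
       (auto intro!: exI[of _ "exp (- (2 * c) * _) * (g' _ - 2 * c * g _)"] hd
             mult_nonneg_nonpos simp: gbound)
  moreover have "h 0 = 0" unfolding h_def g_def using d0 by simp
  ultimately have "g T \<le> 0" unfolding h_def by (simp add: mult_le_0_iff)
  hence "(\<Sum>x\<in>UNIV. (d T x)^2) = 0" unfolding g_def
    by (metis (no_types, lifting) antisym sum_nonneg zero_le_power2)
  hence "(d T x)^2 = 0" by (subst (asm) sum_nonneg_eq_0_iff) auto
  thus ?thesis by simp
qed


lemma heat_repr:
  fixes K :: "'a::finite \<Rightarrow> 'a \<Rightarrow> real"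
  assumes K0: "\<And>x y. 0 \<le> K x y" and K1: "\<And>x y. K x y \<le> 1" and T: "0 \<le> T"
  shows "S (Lm K) T u x = exp (- T) * S K T u x"
proof -
  define d where "d t x = S (Lm K) t u x - exp (- t) * S K t u x" for t x
  have "d T x = 0"
  proof (rule uniq_zero[OF K0 K1 _ _ T])
    fix t x
    have "((\<lambda>t. d t x) has_real_derivative
        kop (Lm K) (S (Lm K) t u) x - (- exp (- t) * S K t u x + exp (- t) * kop K (S K t u) x)) (at t)"
      unfolding d_def
      by (rule derivative_eq_intros S_deriv refl | simp)+
    moreover have "kop (Lm K) (S (Lm K) t u) x - (- exp (- t) * S K t u x + exp (- t) * kop K (S K t u) x)
        = kop (Lm K) (d t) x"
    proof -
      have "kop K (d t) x = kop K (S (Lm K) t u) x - exp (- t) * kop K (S K t u) x"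
        unfolding d_def using kop_lin[of K "S (Lm K) t u" "- exp (- t)" "S K t u" x] by simp
      then show ?thesis unfolding kop_Lm d_def by simp
    qed
    ultimately show "((\<lambda>t. d t x) has_real_derivative kop (Lm K) (d t) x) (at t)" by simp
  next
    fix x show "d 0 x = 0" unfolding d_def by (simp add: S_zero)
  qed
  then show ?thesis unfolding d_def by simp
qed

lemma kop_pow_nonneg:
  assumes K0: "\<And>x y. 0 \<le> K x y" and u: "\<And>x. 0 \<le> u x"
  shows "0 \<le> ((kop K ^^ n) u) x"
proof (induction n arbitrary: x)
  case 0 then show ?case using u by simp
next
  case (Suc n) then show ?case using K0 by (simp add: kop_def sum_nonneg)
qed

lemma S_ge:
  assumes K0: "\<And>x y. 0 \<le> K x y" and u: "\<And>x. 0 \<le> u x" and t: "0 \<le> t"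
  shows "u x \<le> S K t u x"
proof -
  have "(\<Sum>n\<in>{0}. t ^ n / fact n * ((kop K ^^ n) u) x) \<le> (\<Sum>n. t ^ n / fact n * ((kop K ^^ n) u) x)"
    by (rule sum_le_suminf[OF summable_S]) (auto intro!: mult_nonneg_nonneg divide_nonneg_pos kop_pow_nonneg K0 u t zero_le_power)
  then show ?thesis unfolding S_def by simp
qed

lemma heat_ge:
  assumes K0: "\<And>x y. 0 \<le> K x y" and K1: "\<And>x y. K x y \<le> 1"
    and u: "\<And>x. 0 \<le> u x" and t: "0 \<le> t"
  shows "exp (- t) * u x \<le> heat K t u x"
  unfolding heat_S heat_repr[OF K0 K1 t]
  by (intro mult_left_mono S_ge K0 u t) simp


lemma pair_ineq:
  fixes a b :: real assumes a: "0 < a" and b: "0 < b"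
  shows "(sqrt a - sqrt b)^2 \<le> (ln a - ln b) * (a - b)"
proof -
  have main: "(sqrt a - sqrt b)^2 \<le> (ln a - ln b) * (a - b)" if ab: "b \<le> a" "0 < a" "0 < b" for a b :: real
  proof -
    have l: "ln (b / a) \<le> b / a - 1" using ab by (intro ln_le_minus_one) auto
    hence "(a - b) / a \<le> ln a - ln b" using ab by (simp add: ln_div field_simps)
    hence "(a - b) / a * (a - b) \<le> (ln a - ln b) * (a - b)"
      using ab by (intro mult_right_mono) auto
    moreover have "(sqrt a - sqrt b)^2 \<le> (a - b) / a * (a - b)"
    proof -
      have sa: "(sqrt a)^2 = a" "(sqrt b)^2 = b" using ab by auto
      have "a - b = (sqrt a - sqrt b) * (sqrt a + sqrt b)"
        using sa by (simp add: algebra_simps power2_eq_square)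
      hence "(a - b) * (a - b) = ((sqrt a - sqrt b) * (sqrt a + sqrt b))^2"
        by (simp only: power2_eq_square)
      hence "(a - b) * (a - b) = (sqrt a - sqrt b)^2 * (sqrt a + sqrt b)^2"
        by (simp only: power_mult_distrib)
      moreover have "a \<le> (sqrt a + sqrt b)^2"
        using sa ab by (simp add: power2_eq_square algebra_simps)
      ultimately have "(sqrt a - sqrt b)^2 * a \<le> (a - b) * (a - b)"
        by (simp add: mult_left_mono)
      thus ?thesis using ab by (simp add: field_simps)
    qed
    ultimately show ?thesis by linarith
  qed
  show ?thesis
  proof (cases "b \<le> a")
    case True then show ?thesis using main a b by blast
  next
    case False
    then have "(sqrt b - sqrt a)^2 \<le> (ln b - ln a) * (b - a)" using main a b by auto
    then show ?thesis by (simp add: power2_commute algebra_simps)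
  qed
qed

lemma kappa_ineq:
  fixes u m :: real assumes "0 < u" "0 < m"
  shows "u - u * (ln u - ln m) \<le> m"
proof -
  have "ln (m / u) \<le> m / u - 1" using assms by (intro ln_le_minus_one) auto
  hence "u * ln (m / u) \<le> u * (m / u - 1)" using assms by (intro mult_left_mono) auto
  moreover have "u * ln (m / u) = u * (ln m - ln u)" using assms by (simp add: ln_div)
  moreover have "u * (m / u - 1) = m - u" using assms by (simp add: field_simps)
  ultimately have "u * (ln m - ln u) \<le> m - u" by simp
  thus ?thesis by (simp add: algebra_simps)
qed

lemma key_ineq:
  fixes \<rho> :: "'a::finite \<Rightarrow> real" and K :: "'a \<Rightarrow> 'a \<Rightarrow> real" and u :: "'a \<Rightarrow> real"
  assumes \<rho>0: "\<And>x. 0 \<le> \<rho> x" and K0: "\<And>x y. 0 \<le> K x y" and K1: "\<And>x. (\<Sum>y\<in>UNIV. K x y) \<le> 1"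
    and rev: "\<And>x y. \<rho> x * K x y = \<rho> y * K y x"
    and u: "\<And>x. 0 < u x" and m: "0 < m"
  shows "(\<Sum>x\<in>UNIV. \<rho> x * (ln (u x) - ln m) * (kop K u x - u x)) + dirichlet \<rho> K (\<lambda>x. sqrt (u x))
          \<le> expect \<rho> (\<lambda>x. 1 - kop K (\<lambda>_. 1) x) * m"
proof -
  define l where "l x = ln (u x) - ln m" for x
  define s where "s x = sqrt (u x)" for x
  define G where "G x y = l x * (u y - u x) + s x * (s x - s y)" for x y
  define k where "k x = 1 - (\<Sum>y\<in>UNIV. K x y)" for x
  have su: "s x * s x = u x" for x unfolding s_def using u[of x] by (simp add: less_imp_le)
  have perx: "\<rho> x * l x * (kop K u x - u x) + \<rho> x * (s x * (s x - kop K s x))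
      = (\<Sum>y\<in>UNIV. \<rho> x * K x y * G x y) + \<rho> x * k x * (u x - u x * l x)" for x
  proof -
    have "(\<Sum>y\<in>UNIV. \<rho> x * K x y * G x y)
        = \<rho> x * (l x * kop K u x - l x * u x * (\<Sum>y\<in>UNIV. K x y) + u x * (\<Sum>y\<in>UNIV. K x y) - s x * kop K s x)"
      unfolding G_def kop_def
      by (simp add: sum_distrib_left sum_distrib_right sum.distrib sum_subtractf algebra_simps su)
    then show ?thesis unfolding k_def by (simp add: algebra_simps su)
  qed
  have lhs: "(\<Sum>x\<in>UNIV. \<rho> x * (ln (u x) - ln m) * (kop K u x - u x)) + dirichlet \<rho> K (\<lambda>x. sqrt (u x))
      = (\<Sum>x\<in>UNIV. \<Sum>y\<in>UNIV. \<rho> x * K x y * G x y) + (\<Sum>x\<in>UNIV. \<rho> x * k x * (u x - u x * l x))"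
  proof -
    have "dirichlet \<rho> K (\<lambda>x. sqrt (u x)) = (\<Sum>x\<in>UNIV. \<rho> x * (s x * (s x - kop K s x)))"
      unfolding dirichlet_def expect_def s_def by simp
    then show ?thesis
      by (simp add: l_def[symmetric] sum.distrib[symmetric] perx)
  qed
  have sym: "(\<Sum>x\<in>UNIV. \<Sum>y\<in>UNIV. \<rho> x * K x y * G x y) \<le> 0"
  proof -
    have "(\<Sum>x\<in>UNIV. \<Sum>y\<in>UNIV. \<rho> x * K x y * G x y) = (\<Sum>y\<in>UNIV. \<Sum>x\<in>UNIV. \<rho> x * K x y * G x y)"
      by (rule sum.swap)
    also have "\<dots> = (\<Sum>x\<in>UNIV. \<Sum>y\<in>UNIV. \<rho> x * K x y * G y x)"
      using rev by simp
    finally have e: "2 * (\<Sum>x\<in>UNIV. \<Sum>y\<in>UNIV. \<rho> x * K x y * G x y)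
        = (\<Sum>x\<in>UNIV. \<Sum>y\<in>UNIV. \<rho> x * K x y * (G x y + G y x))"
      by (simp add: sum.distrib algebra_simps)
    have "G x y + G y x \<le> 0" for x y
    proof -
      have "G x y + G y x = (s x - s y)^2 - (ln (u x) - ln (u y)) * (u x - u y)"
        unfolding G_def l_def by (simp add: power2_eq_square algebra_simps su)
      also have "\<dots> \<le> 0" using pair_ineq[OF u[of x] u[of y]] unfolding s_def by simp
      finally show ?thesis .
    qed
    hence "(\<Sum>x\<in>UNIV. \<Sum>y\<in>UNIV. \<rho> x * K x y * (G x y + G y x)) \<le> 0"
      by (intro sum_nonpos mult_nonneg_nonpos mult_nonneg_nonneg \<rho>0 K0)
    with e show ?thesis by simp
  qed
  have kap: "(\<Sum>x\<in>UNIV. \<rho> x * k x * (u x - u x * l x)) \<le> (\<Sum>x\<in>UNIV. \<rho> x * k x * m)"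
    unfolding l_def
    by (intro sum_mono mult_left_mono kappa_ineq u m mult_nonneg_nonneg \<rho>0)
       (use K1 in \<open>auto simp: k_def\<close>)
  have "(\<Sum>x\<in>UNIV. \<rho> x * k x * m) = expect \<rho> (\<lambda>x. 1 - kop K (\<lambda>_. 1) x) * m"
    unfolding expect_def kop_def k_def by (simp add: sum_distrib_right)
  with lhs sym kap show ?thesis by linarith
qed


lemma xlogx_deriv:
  assumes "0 < s" shows "(xlogx has_real_derivative ln s + 1) (at s)"
proof (rule has_field_derivative_transform_within_open[where S="{0<..}"])
  show "((\<lambda>s. s * ln s) has_real_derivative ln s + 1) (at s)"
    using assms by (auto intro!: derivative_eq_intros)
  show "\<And>x. x \<in> {0<..} \<Longrightarrow> x * ln x = xlogx x" by (simp add: xlogx_def)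
qed (use assms in auto)

lemma Hent_alt:
  fixes \<rho> u :: "'a::finite \<Rightarrow> real"
  assumes \<rho>0: "\<And>x. 0 \<le> \<rho> x" and u0: "\<And>x. 0 \<le> u x"
  shows "Hent \<rho> u = expect \<rho> (\<lambda>x. xlogx (u x)) - xlogx (expect \<rho> u)"
proof (cases "expect \<rho> u = 0")
  case True
  hence "\<forall>x\<in>UNIV. \<rho> x * u x = 0"
    unfolding expect_def by (subst sum_nonneg_eq_0_iff[symmetric]) (auto intro: mult_nonneg_nonneg \<rho>0 u0)
  hence z: "\<rho> x * u x = 0" for x by auto
  have "\<rho> x * (if u x = 0 then 0 else u x * ln (u x / c)) = 0" for x c
  proof -
    have "\<rho> x * (if u x = 0 then 0 else u x * ln (u x / c)) = (if u x = 0 then 0 else (\<rho> x * u x) * ln (u x / c))"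
      by simp
    also have "\<dots> = 0" using z[of x] by auto
    finally show ?thesis .
  qed
  hence "Hent \<rho> u = 0" unfolding Hent_def expect_def by (intro sum.neutral) blast
  moreover have "expect \<rho> (\<lambda>x. xlogx (u x)) = 0"
    unfolding expect_def xlogx_def using z by (intro sum.neutral) (metis mult_eq_0_iff)
  ultimately show ?thesis using True by (simp add: xlogx_def)
next
  case False
  let ?m = "expect \<rho> u"
  have mpos: "0 < ?m" using False unfolding expect_def
    by (metis (no_types, lifting) less_eq_real_def mult_nonneg_nonneg sum_nonneg \<rho>0 u0)
  have "\<rho> x * (if u x = 0 then 0 else u x * ln (u x / ?m)) = \<rho> x * xlogx (u x) - \<rho> x * u x * ln ?m" for x
    using u0[of x] mpos by (auto simp: xlogx_def ln_div algebra_simps)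
  hence "Hent \<rho> u = expect \<rho> (\<lambda>x. xlogx (u x)) - ?m * ln ?m"
    unfolding Hent_def by (simp add: expect_def sum_subtractf sum_distrib_right[symmetric])
  then show ?thesis using mpos by (simp add: xlogx_def)
qed


lemma main_pos:
  fixes \<rho> :: "'a::finite \<Rightarrow> real" and K :: "'a \<Rightarrow> 'a \<Rightarrow> real"
    and A T :: real and w :: "'a \<Rightarrow> real"
  assumes pf: "prob_fun \<rho>" and sk: "substochastic K" and rv: "reversible \<rho> K"
    and A: "0 < A"
    and LSI: "\<And>f. (\<forall>x. 0 \<le> f x) \<Longrightarrow> Ent \<rho> (\<lambda>x. (f x)^2) \<le> A * dirichlet \<rho> K f"
    and w: "\<And>x. 0 < w x" and T: "0 \<le> T"
  shows "Hent \<rho> (heat K T w)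
           \<le> exp (- T / A) * Hent \<rho> w
             + A * expect \<rho> (\<lambda>x. 1 - kop K (\<lambda>_. 1) x) * expect \<rho> w * (1 - exp (- T / A))"
proof -
  have \<rho>0: "\<And>x. 0 \<le> \<rho> x" and \<rho>1: "(\<Sum>x\<in>UNIV. \<rho> x) = 1" using pf by (auto simp: prob_fun_def)
  have K0: "\<And>x y. 0 \<le> K x y" and Ks: "\<And>x. (\<Sum>y\<in>UNIV. K x y) \<le> 1"
    using sk by (auto simp: substochastic_def)
  have K1: "K x y \<le> 1" for x y
    using member_le_sum[of y UNIV "K x"] K0 Ks[of x] by auto
  have rev: "\<And>x y. \<rho> x * K x y = \<rho> y * K y x" using rv by (auto simp: reversible_def)
  define \<delta> where "\<delta> = expect \<rho> (\<lambda>x. 1 - kop K (\<lambda>_. 1) x)"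
  have \<delta>0: "0 \<le> \<delta>"
    unfolding \<delta>_def expect_def kop_def using Ks \<rho>0 by (auto intro!: sum_nonneg mult_nonneg_nonneg)
  define u where "u t = heat K t w" for t
  have ud: "((\<lambda>t. u t x) has_real_derivative kop K (u t) x - u t x) (at t)" for t x
    unfolding u_def heat_S using S_deriv[of "Lm K" w x t] by (simp add: kop_Lm)
  have upos: "0 < u t x" if "0 \<le> t" for t x
  proof -
    have "exp (- t) * w x \<le> u t x" unfolding u_def
      by (rule heat_ge[OF K0 K1 _ that]) (simp add: less_imp_le w)
    moreover have "0 < exp (- t) * w x" using w by simp
    ultimately show ?thesis by linarith
  qed
  have u_0: "u 0 = w" unfolding u_def heat_S by (simp add: S_zero fun_eq_iff)
  define m where "m t = (\<Sum>x\<in>UNIV. \<rho> x * u t x)" for t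
  have m_exp: "m t = expect \<rho> (u t)" for t unfolding m_def expect_def ..
  define m' where "m' t = (\<Sum>x\<in>UNIV. \<rho> x * (kop K (u t) x - u t x))" for t
  have md: "(m has_real_derivative m' t) (at t)" for t
    unfolding m_def[abs_def] m'_def
    by (rule DERIV_sum, rule DERIV_cmult, rule ud)
  obtain x0 where x0: "0 < \<rho> x0"
  proof -
    have "\<exists>x. 0 < \<rho> x"
    proof (rule ccontr)
      assume "\<not> (\<exists>x. 0 < \<rho> x)"
      hence "\<rho> x = 0" for x using \<rho>0[of x] by (metis antisym not_less)
      thus False using \<rho>1 by simp
    qed
    thus ?thesis using that by blast
  qed
  have mpos: "0 < m t" if "0 \<le> t" for t
  proof -
    have "\<rho> x0 * u t x0 \<le> m t" unfolding m_def
      by (rule member_le_sum[of x0 UNIV "\<lambda>x. \<rho> x * u t x"]) (auto intro!: mult_nonneg_nonneg \<rho>0 simp: less_imp_le[OF upos[OF that]])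
    moreover have "0 < \<rho> x0 * u t x0" using x0 upos[OF that] by simp
    ultimately show ?thesis by linarith
  qed
  have m'neg: "m' t \<le> 0" if "0 \<le> t" for t
  proof -
    have "(\<Sum>x\<in>UNIV. \<rho> x * kop K (u t) x) = (\<Sum>x\<in>UNIV. \<Sum>y\<in>UNIV. \<rho> x * K x y * u t y)"
      unfolding kop_def by (simp add: sum_distrib_left mult.assoc)
    also have "\<dots> = (\<Sum>y\<in>UNIV. \<Sum>x\<in>UNIV. \<rho> x * K x y * u t y)" by (rule sum.swap)
    also have "\<dots> = (\<Sum>y\<in>UNIV. \<rho> y * u t y * (\<Sum>x\<in>UNIV. K y x))"
      by (simp add: rev sum_distrib_left algebra_simps)
    also have "\<dots> \<le> (\<Sum>y\<in>UNIV. \<rho> y * u t y * 1)"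
      by (intro sum_mono mult_left_mono Ks mult_nonneg_nonneg \<rho>0 less_imp_le upos that)
    finally show ?thesis unfolding m'_def by (simp add: sum_subtractf algebra_simps)
  qed
  have mmono: "m t \<le> m 0" if "0 \<le> t" for t
    by (rule DERIV_nonpos_imp_nonincreasing[OF that]) (auto intro!: md m'neg)
  define F where "F t = (\<Sum>x\<in>UNIV. \<rho> x * xlogx (u t x)) - xlogx (m t)" for t
  define P where "P t = (\<Sum>x\<in>UNIV. \<rho> x * (ln (u t x) - ln (m t)) * (kop K (u t) x - u t x))" for t
  have Fd: "(F has_real_derivative P t) (at t)" if "0 \<le> t" for t
  proof -
    have "(F has_real_derivative
        (\<Sum>x\<in>UNIV. \<rho> x * ((ln (u t x) + 1) * (kop K (u t) x - u t x))) - (ln (m t) + 1) * m' t) (at t)"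
      unfolding F_def[abs_def]
      by (intro DERIV_diff DERIV_sum DERIV_cmult DERIV_chain2[OF xlogx_deriv] ud md upos mpos that)
    moreover have "(\<Sum>x\<in>UNIV. \<rho> x * ((ln (u t x) + 1) * (kop K (u t) x - u t x))) - (ln (m t) + 1) * m' t = P t"
      unfolding P_def m'_def
      by (simp add: sum_distrib_left sum_subtractf[symmetric] algebra_simps)
    ultimately show ?thesis by simp
  qed
  have F_Hent: "F t = Hent \<rho> (u t)" if "0 \<le> t" for t
    unfolding F_def m_exp
    by (subst Hent_alt[OF \<rho>0]) (auto simp: expect_def less_imp_le upos that)
  have Pbound: "P t \<le> \<delta> * m 0 - F t / A" if "0 \<le> t" for t
  proof -
    have "F t = Ent \<rho> (\<lambda>x. (sqrt (u t x))^2)"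
      unfolding F_def Ent_def m_def expect_def using upos[OF that] by (simp add: less_imp_le)
    also have "\<dots> \<le> A * dirichlet \<rho> K (\<lambda>x. sqrt (u t x))" by (rule LSI) (simp add: less_imp_le[OF upos[OF that]])
    finally have "F t / A \<le> dirichlet \<rho> K (\<lambda>x. sqrt (u t x))" using A by (simp add: field_simps)
    moreover have "P t + dirichlet \<rho> K (\<lambda>x. sqrt (u t x)) \<le> \<delta> * m t"
      unfolding P_def \<delta>_def
      using key_ineq[where u="u t" and m="m t", OF \<rho>0 K0 Ks rev upos[OF that] mpos[OF that]] by (simp add: mult.commute)
    moreover have "\<delta> * m t \<le> \<delta> * m 0" by (intro mult_left_mono mmono that \<delta>0)
    ultimately show ?thesis by linarith
  qed
  define G where "G t = exp (t / A) * (F t - A * \<delta> * m 0)" for t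
  have Gd: "(G has_real_derivative exp (t / A) * (1 / A) * (F t - A * \<delta> * m 0) + exp (t / A) * P t) (at t)"
    if "0 \<le> t" for t
  proof -
    have e: "((\<lambda>t. exp (t / A)) has_real_derivative exp (t / A) * (1 / A)) (at t)"
      by (rule DERIV_chain2[OF DERIV_exp DERIV_cdivide[OF DERIV_ident]])
    have f: "((\<lambda>t. F t - A * \<delta> * m 0) has_real_derivative P t) (at t)"
      using DERIV_diff[OF Fd[OF that] DERIV_const] by simp
    show ?thesis unfolding G_def[abs_def]
      using DERIV_mult[OF e f] by (simp add: algebra_simps)
  qed
  have Gd_nonpos: "exp (t / A) * (1 / A) * (F t - A * \<delta> * m 0) + exp (t / A) * P t \<le> 0" if "0 \<le> t" for t
  proof -
    have "(1 / A) * (F t - A * \<delta> * m 0) + P t \<le> 0"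
      using Pbound[OF that] A by (simp add: field_simps)
    hence "exp (t / A) * ((1 / A) * (F t - A * \<delta> * m 0) + P t) \<le> 0"
      by (intro mult_nonneg_nonpos) auto
    thus ?thesis by (simp only: distrib_left mult.assoc)
  qed
  have "G T \<le> G 0"
    by (rule DERIV_nonpos_imp_nonincreasing[OF T]) (auto intro!: Gd Gd_nonpos)
  hence "exp (T / A) * (F T - A * \<delta> * m 0) \<le> F 0 - A * \<delta> * m 0" unfolding G_def by simp
  hence "exp (- T / A) * (exp (T / A) * (F T - A * \<delta> * m 0)) \<le> exp (- T / A) * (F 0 - A * \<delta> * m 0)"
    by (intro mult_left_mono) auto
  hence "F T - A * \<delta> * m 0 \<le> exp (- T / A) * (F 0 - A * \<delta> * m 0)"
    by (simp add: mult.assoc[symmetric] exp_add[symmetric])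
  moreover have "F T = Hent \<rho> (heat K T w)" using F_Hent[OF T] unfolding u_def .
  moreover have "F 0 = Hent \<rho> w" using F_Hent[of 0] u_0 by simp
  moreover have "m 0 = expect \<rho> w" using m_exp u_0 by simp
  ultimately show ?thesis unfolding \<delta>_def by (simp add: algebra_simps)
qed


lemma xlogx_small:
  fixes s :: real assumes s: "0 < s" "s \<le> 1"
  shows "\<bar>xlogx s\<bar> \<le> 2 * sqrt s"
proof -
  have sq: "0 < sqrt s" using s by simp
  have "ln (1 / sqrt s) \<le> 1 / sqrt s - 1" using sq by (intro ln_le_minus_one) simp
  moreover have "ln (1 / sqrt s) = - ln s / 2" using s by (simp add: ln_div ln_sqrt)
  ultimately have "- ln s \<le> 2 / sqrt s" by simp
  hence "s * (- ln s) \<le> s * (2 / sqrt s)" using s by (intro mult_left_mono) auto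
  moreover have "s * (2 / sqrt s) = 2 * sqrt s"
    using s sq by (simp add: field_simps)
  moreover have "ln s \<le> 0" using s by simp
  ultimately show ?thesis using s mult_nonneg_nonpos[of s "ln s"] by (simp add: xlogx_def abs_if)
qed

lemma xlogx_lim:
  fixes a b :: real assumes a: "0 \<le> a" and b: "0 \<le> b"
  shows "((\<lambda>e. xlogx (a + e * b)) \<longlongrightarrow> xlogx a) (at_right 0)"
proof (cases "0 < a")
  case True
  have c: "isCont xlogx a" by (rule DERIV_isCont[OF xlogx_deriv[OF True]])
  have "((\<lambda>e. a + e * b) \<longlongrightarrow> a + 0 * b) (at_right 0)"
    by (intro tendsto_intros)
  hence "((\<lambda>e. a + e * b) \<longlongrightarrow> a) (at_right 0)" by simp
  then show ?thesis by (rule isCont_tendsto_compose[OF c])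
next
  case False
  hence a0: "a = 0" using a by simp
  show ?thesis
  proof (cases "b = 0")
    case True then show ?thesis using a0 by simp
  next
    case False
    hence bp: "0 < b" using b by simp
    have ev: "eventually (\<lambda>e. norm (xlogx (e * b)) \<le> 2 * sqrt (e * b)) (at_right 0)"
      using eventually_at_right_real[of 0 "1 / b"] bp
    proof (rule_tac eventually_mono)
      show "eventually (\<lambda>x. x \<in> {0<..<1 / b}) (at_right 0)"
        using eventually_at_right_real[of 0 "1 / b"] bp by simp
    next
      fix e assume "e \<in> {0<..<1 / b}"
      hence "0 < e * b" "e * b \<le> 1" using bp by (auto simp: field_simps)
      thus "norm (xlogx (e * b)) \<le> 2 * sqrt (e * b)" using xlogx_small by simp
    qed
    have "((\<lambda>e. 2 * sqrt (e * b)) \<longlongrightarrow> 2 * sqrt (0 * b)) (at_right 0)"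
      by (intro tendsto_intros)
    hence "((\<lambda>e. 2 * sqrt (e * b)) \<longlongrightarrow> 0) (at_right 0)" by simp
    from Lim_null_comparison[OF ev this] show ?thesis using a0 by (simp add: xlogx_def)
  qed
qed

lemma Hent_lim:
  fixes \<rho> f g :: "'a::finite \<Rightarrow> real"
  assumes \<rho>0: "\<And>x. 0 \<le> \<rho> x" and f: "\<And>x. 0 \<le> f x" and g: "\<And>x. 0 \<le> g x"
  shows "((\<lambda>e. Hent \<rho> (\<lambda>x. f x + e * g x)) \<longlongrightarrow> Hent \<rho> f) (at_right 0)"
proof -
  have ex: "expect \<rho> (\<lambda>x. f x + e * g x) = expect \<rho> f + e * expect \<rho> g" for e
    unfolding expect_def by (simp add: algebra_simps sum.distrib sum_distrib_left)
  have ev: "eventually (\<lambda>e. (\<Sum>x\<in>UNIV. \<rho> x * xlogx (f x + e * g x)) - xlogx (expect \<rho> f + e * expect \<rho> g)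
      = Hent \<rho> (\<lambda>x. f x + e * g x)) (at_right 0)"
  proof (rule eventually_mono[OF eventually_at_right_real[OF zero_less_one]])
    fix e :: real assume "e \<in> {0<..<1}"
    hence "0 \<le> f x + e * g x" for x using f[of x] g[of x] by simp
    then show "(\<Sum>x\<in>UNIV. \<rho> x * xlogx (f x + e * g x)) - xlogx (expect \<rho> f + e * expect \<rho> g)
      = Hent \<rho> (\<lambda>x. f x + e * g x)"
      by (subst Hent_alt[OF \<rho>0]) (auto simp: ex, simp add: expect_def)
  qed
  have ef: "0 \<le> expect \<rho> f" "0 \<le> expect \<rho> g"
    unfolding expect_def by (auto intro!: sum_nonneg mult_nonneg_nonneg \<rho>0 f g)
  have "((\<lambda>e. (\<Sum>x\<in>UNIV. \<rho> x * xlogx (f x + e * g x)) - xlogx (expect \<rho> f + e * expect \<rho> g))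
      \<longlongrightarrow> (\<Sum>x\<in>UNIV. \<rho> x * xlogx (f x)) - xlogx (expect \<rho> f)) (at_right 0)"
    by (intro tendsto_diff tendsto_sum tendsto_mult_left xlogx_lim f g ef)
  moreover have "(\<Sum>x\<in>UNIV. \<rho> x * xlogx (f x)) - xlogx (expect \<rho> f) = Hent \<rho> f"
    by (subst Hent_alt[OF \<rho>0 f]) (simp add: expect_def)
  ultimately show ?thesis using tendsto_cong[OF ev] by simp
qed


theorem lemma2p4:
  fixes \<rho> :: "'a::finite \<Rightarrow> real" and K :: "'a \<Rightarrow> 'a \<Rightarrow> real"
    and A t :: real and u0 :: "'a \<Rightarrow> real"
  assumes "prob_fun \<rho>" and "substochastic K" and "reversible \<rho> K"
    and "0 < A"
    and "\<And>f. (\<forall>x. 0 \<le> f x) \<Longrightarrow> Ent \<rho> (\<lambda>x. (f x)^2) \<le> A * dirichlet \<rho> K f"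
    and "\<forall>x. 0 \<le> u0 x" and "0 \<le> t"
  shows "Hent \<rho> (heat K t u0)
           \<le> exp (- t / A) * Hent \<rho> u0
             + A * expect \<rho> (\<lambda>x. 1 - kop K (\<lambda>_. 1) x) * expect \<rho> u0 * (1 - exp (- t / A))"
proof -
  note pf = assms(1) and sk = assms(2) and rv = assms(3) and A = assms(4) and LSI = assms(5)
    and T = assms(7)
  have u0: "\<And>x. 0 \<le> u0 x" using assms(6) by blast
  have \<rho>0: "\<And>x. 0 \<le> \<rho> x" using pf by (auto simp: prob_fun_def)
  have K0: "\<And>x y. 0 \<le> K x y" and Ks: "\<And>x. (\<Sum>y\<in>UNIV. K x y) \<le> 1"
    using sk by (auto simp: substochastic_def)
  have K1: "K x y \<le> 1" for x y
    using member_le_sum[of y UNIV "K x"] K0 Ks[of x] by auto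
  define \<delta> where "\<delta> = expect \<rho> (\<lambda>x. 1 - kop K (\<lambda>_. 1) x)"
  define h where "h = heat K t u0"
  define h1 where "h1 = heat K t (\<lambda>_. 1)"
  have lin: "heat K t (\<lambda>x. u0 x + e * 1) = (\<lambda>x. h x + e * h1 x)" for e
    unfolding h_def h1_def heat_S
    using S_lin[of "Lm K" t u0 e "\<lambda>_. 1"] by (simp add: fun_eq_iff)
  have h0: "0 \<le> h x" for x
  proof -
    have "exp (- t) * u0 x \<le> h x" unfolding h_def by (rule heat_ge[OF K0 K1 u0 T])
    moreover have "0 \<le> exp (- t) * u0 x" using u0 by simp
    ultimately show ?thesis by linarith
  qed
  have h10: "0 \<le> h1 x" for x
  proof -
    have "exp (- t) * 1 \<le> h1 x" unfolding h1_def by (rule heat_ge[OF K0 K1 _ T]) simp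
    moreover have "0 \<le> exp (- t) * (1::real)" by simp
    ultimately show ?thesis by linarith
  qed
  have ev: "eventually (\<lambda>e. Hent \<rho> (\<lambda>x. h x + e * h1 x) \<le>
      exp (- t / A) * Hent \<rho> (\<lambda>x. u0 x + e * 1) + A * \<delta> * expect \<rho> (\<lambda>x. u0 x + e * 1) * (1 - exp (- t / A)))
      (at_right 0)"
  proof (rule eventually_mono[OF eventually_at_right_real[OF zero_less_one]])
    fix e :: real assume e: "e \<in> {0<..<1}"
    have pos: "\<And>x. 0 < u0 x + e * 1" using e u0 by (simp add: add_nonneg_pos)
    have mp: "Hent \<rho> (heat K t (\<lambda>x. u0 x + e * 1))
           \<le> exp (- t / A) * Hent \<rho> (\<lambda>x. u0 x + e * 1)
             + A * expect \<rho> (\<lambda>x. 1 - kop K (\<lambda>_. 1) x) * expect \<rho> (\<lambda>x. u0 x + e * 1) * (1 - exp (- t / A))"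
      by (rule main_pos[where w="\<lambda>x. u0 x + e * 1", OF pf sk rv A _ pos T]) (rule LSI)
    from mp show "Hent \<rho> (\<lambda>x. h x + e * h1 x) \<le>
      exp (- t / A) * Hent \<rho> (\<lambda>x. u0 x + e * 1) + A * \<delta> * expect \<rho> (\<lambda>x. u0 x + e * 1) * (1 - exp (- t / A))"
      unfolding lin \<delta>_def .
  qed
  have l1: "((\<lambda>e. Hent \<rho> (\<lambda>x. h x + e * h1 x)) \<longlongrightarrow> Hent \<rho> h) (at_right 0)"
    by (rule Hent_lim[OF \<rho>0 h0 h10])
  have l2: "((\<lambda>e. Hent \<rho> (\<lambda>x. u0 x + e * 1)) \<longlongrightarrow> Hent \<rho> u0) (at_right 0)"
    by (rule Hent_lim[OF \<rho>0 u0]) simp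
  have ex: "expect \<rho> (\<lambda>x. u0 x + e * 1) = expect \<rho> u0 + e * expect \<rho> (\<lambda>_. 1)" for e
    unfolding expect_def by (simp add: algebra_simps sum.distrib sum_distrib_left)
  have l3: "((\<lambda>e. expect \<rho> (\<lambda>x. u0 x + e * 1)) \<longlongrightarrow> expect \<rho> u0) (at_right 0)"
  proof -
    have "((\<lambda>e. expect \<rho> u0 + e * expect \<rho> (\<lambda>_. 1)) \<longlongrightarrow> expect \<rho> u0 + 0 * expect \<rho> (\<lambda>_. 1)) (at_right 0)"
      by (intro tendsto_intros)
    then show ?thesis unfolding ex by simp
  qed
  have "Hent \<rho> h \<le> exp (- t / A) * Hent \<rho> u0 + A * \<delta> * expect \<rho> u0 * (1 - exp (- t / A))"
    by (rule tendsto_le[OF trivial_limit_at_right_real _ l1 ev]) (intro tendsto_intros l2 l3)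
  then show ?thesis unfolding h_def \<delta>_def .
qed

end
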